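(* Let $1\le t\le s$. Then $p\,\mathcal M^t_{p^s}\subset\mathcal M^{t-1}_{p^s}$, and for every $f\in\mathbb Z[z]_{p^t}$ multiplication by $\pi_s(f)$ maps $\mathcal M^t_{p^s}$ into itself and $\mathcal M^{t-1}_{p^s}$ into itself. The induced action of $\mathbb Z[z]_{p^t}$ on $\mathrm{gr}\,\mathcal M^t_{p^s}=\mathcal M^t_{p^s}/\mathcal M^{t-1}_{p^s}$ factors through the ring homomorphism $\rho_t:\mathbb Z[z]_{p^t}\to\mathbb F_p[z_1^{p^t},\dots,z_n^{p^t}]$, making $\mathrm{gr}\,\mathcal M^t_{p^s}$ an $\mathbb F_p[z_1^{p^t},\dots,z_n^{p^t}]$-module; and multiplication by $p$ induces a homomorphism of $\mathbb F_p[z_1^{p^t},\dots,z_n^{p^t}]$-modules $\mathrm{gr}\,\mathcal M^t_{p^s}\to\mathrm{gr}\,\mathcal M^{t-1}_{p^s}$ (where $\mathrm{gr}\,\mathcal M^{t-1}_{p^s}$ is regarded as an $\mathbb F_p[z^{p^t}]$-module by restriction from $\mathbb F_p[z^{p^{t-1}}]$, and $\mathrm{gr}\,\mathcal M^0_{p^s}=0$).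
   Context: Let $p$ be an odd prime, $g\ge1$, $n=2g+1$, with $p>n$; $z=(z_1,\dots,z_n)$; $\pi_s$ denotes reduction modulo $p^s$ on $\mathbb Z[z]^n$. Quasi-constants: $f\in\mathbb Z[z]$ is a quasi-constant modulo $p^r$ if $\partial f/\partial z_i\in p^r\mathbb Z[z]$ for all $i$; these form a ring $\mathbb Z[z]_{p^r}$. Every $f\in\mathbb Z[z]_{p^t}$ can be written as $f=\sum_d c_dz^d$ where $c_d$ is divisible by $p^{t-\tau(d)}$, with $\tau(d)$ the largest integer $\le t$ such that $p^{\tau(d)}$ divides all $d_i$. Define $\rho_t(f)\in\mathbb F_p[z_1^{p^t},\dots,z_n^{p^t}]$ as the reduction modulo $p$ of $\sum_{d:\,p^t\mid d_i\ \forall i}c_dz^d$. For a positive integer $r$ put $M_r=(p^r-1)/2$, $\Phi_{p^r}(x,z)=\prod_{i=1}^n(x-z_i)^{M_r}$, expand $\Big(\frac{\Phi_{p^r}}{x-z_1},\dots,\frac{\Phi_{p^r}}{x-z_n}\Big)=\sum_iP^i_{p^r}(z)x^i$ with $P^i_{p^r}(z)\in\mathbb Z[z]^n$, and set $I^{[lp^r-1]}_{p^r}(z)=P^{lp^r-1}_{p^r}(z)$. For $1\le t\le s$ define $\mathcal M^t_{p^s}=\{\pi_s(\sum_{r=1}^t\sum_{l=1}^g c_{r,l}(z)\,p^{s-r}I^{[lp^r-1]}_{p^r}(z)) : c_{r,l}\in\mathbb Z[z]_{p^r}\}$, $\mathcal M^0_{p^s}=0$. *)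

theory Defs
  imports "HOL-Library.Poly_Mapping" "HOL-Computational_Algebra.Polynomial"
begin

text \<open>Polynomials in the variables z_0, z_1, ... with integer coefficients:
  finitely supported maps from exponent vectors to coefficients.
  The paper's z_1..z_n are z_0..z_(n-1) here.\<close>
type_synonym mpoly = "(nat \<Rightarrow>\<^sub>0 nat) \<Rightarrow>\<^sub>0 int"

text \<open>Vectors in Z[z]^n: components indexed by i < n (components i >= n are unused / zero).\<close>
type_synonym mvec = "nat \<Rightarrow> mpoly"

definition Zz :: "nat \<Rightarrow> mpoly set" where
  "Zz n = {f. \<forall>d\<in>Poly_Mapping.keys f. Poly_Mapping.keys d \<subseteq> {..<n}}"

definition zvar :: "nat \<Rightarrow> mpoly" where
  "zvar i = Poly_Mapping.single (Poly_Mapping.single i 1) 1"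

definition pdiff :: "nat \<Rightarrow> mpoly \<Rightarrow> mpoly" where
  "pdiff i f = (\<Sum>(d::nat \<Rightarrow>\<^sub>0 nat)\<in>Poly_Mapping.keys f.
     Poly_Mapping.single (d - Poly_Mapping.single i 1)
       ((of_nat (Poly_Mapping.lookup d i) :: int) * Poly_Mapping.lookup f d))"

text \<open>Quasi-constants modulo p^r: the ring Z[z]_{p^r}.\<close>
definition QC :: "nat \<Rightarrow> nat \<Rightarrow> nat \<Rightarrow> mpoly set" where
  "QC n p r = {f \<in> Zz n. \<forall>i<n. \<forall>d. (int p) ^ r dvd Poly_Mapping.lookup (pdiff i f) d}"

definition red :: "int \<Rightarrow> mpoly \<Rightarrow> mpoly" where
  "red m f = Poly_Mapping.map (\<lambda>c. c mod m) f"

definition pis :: "nat \<Rightarrow> nat \<Rightarrow> mvec \<Rightarrow> mvec" where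
  "pis p s v = (\<lambda>i. red ((int p) ^ s) (v i))"

definition Mr :: "nat \<Rightarrow> nat \<Rightarrow> nat" where
  "Mr p r = (p ^ r - 1) div 2"

text \<open>The i-th component Phi_{p^r}(x,z)/(x - z_i), as a polynomial in x over Z[z].\<close>
definition PhiQuot :: "nat \<Rightarrow> nat \<Rightarrow> nat \<Rightarrow> nat \<Rightarrow> mpoly poly" where
  "PhiQuot n p r i = [:- zvar i, 1:] ^ (Mr p r - 1) *
     (\<Prod>j\<in>{..<n} - {i}. [:- zvar j, 1:] ^ Mr p r)"

definition Ivec :: "nat \<Rightarrow> nat \<Rightarrow> nat \<Rightarrow> nat \<Rightarrow> mvec" where
  "Ivec n p r l = (\<lambda>i. if i < n then coeff (PhiQuot n p r i) (l * p ^ r - 1) else 0)"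

text \<open>The submodule M^t_{p^s} (for t = 0 this is {0}).\<close>
definition Mset :: "nat \<Rightarrow> nat \<Rightarrow> nat \<Rightarrow> nat \<Rightarrow> nat \<Rightarrow> mvec set" where
  "Mset n g p s t = {pis p s (\<lambda>i. \<Sum>r\<in>{1..t}. \<Sum>l\<in>{1..g}.
        c r l * of_int ((int p) ^ (s - r)) * Ivec n p r l i)
      | c. \<forall>r\<in>{1..t}. \<forall>l\<in>{1..g}. c r l \<in> QC n p r}"

text \<open>F_p[z_1^{p^t},...,z_n^{p^t}], coefficients represented in [0,p).\<close>
definition FpZ :: "nat \<Rightarrow> nat \<Rightarrow> nat \<Rightarrow> mpoly set" where
  "FpZ n p t = {a \<in> Zz n. (\<forall>d\<in>Poly_Mapping.keys a. \<forall>i. p ^ t dvd Poly_Mapping.lookup d i)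
                        \<and> (\<forall>d. 0 \<le> Poly_Mapping.lookup a d \<and> Poly_Mapping.lookup a d < int p)}"

definition rho :: "nat \<Rightarrow> nat \<Rightarrow> mpoly \<Rightarrow> mpoly" where
  "rho p t f = (\<Sum>d\<in>{d\<in>Poly_Mapping.keys f. \<forall>i. p ^ t dvd Poly_Mapping.lookup d i}.
      Poly_Mapping.single d (Poly_Mapping.lookup f d mod int p))"

end

theory Submission
  imports Defs "HOL-Computational_Algebra.Primes"
begin


lemma lookup_map_eq: "Poly_Mapping.lookup (Poly_Mapping.map h f) d
   = (if Poly_Mapping.lookup f d = 0 then 0 else h (Poly_Mapping.lookup f d))"
  by (simp add: Poly_Mapping.map.rep_eq when_def)

lemma lookup_red: "Poly_Mapping.lookup (red m f) d = Poly_Mapping.lookup f d mod m"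
  by (simp add: red_def lookup_map_eq)

lemma lookup_ofint_mult: "Poly_Mapping.lookup (of_int c * (f::mpoly)) d = c * Poly_Mapping.lookup f d"
proof -
  have "of_int c * f = Poly_Mapping.map ((*) c) f"
    by (simp add: mult_map_scale_conv_mult flip: single_of_int)
  then show ?thesis by (simp add: lookup_map_eq)
qed

lemma lookup_ofnat_mult: "Poly_Mapping.lookup (of_nat c * (f::mpoly)) d = int c * Poly_Mapping.lookup f d"
  using lookup_ofint_mult[of "int c" f d] by simp

lemma lookup_ofnatpow_mult [simp]: "Poly_Mapping.lookup (of_nat p ^ x * (f::mpoly)) d = int p ^ x * Poly_Mapping.lookup f d"
  using lookup_ofint_mult[of "int p ^ x" f d] by simp

definition dvdc :: "int \<Rightarrow> mpoly \<Rightarrow> bool" where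
  "dvdc m f \<longleftrightarrow> (\<forall>d. m dvd Poly_Mapping.lookup f d)"

lemma dvdc_iff: "dvdc m f \<longleftrightarrow> (\<exists>h. f = of_int m * h)"
proof
  assume a: "dvdc m f"
  have "f = of_int m * Poly_Mapping.map (\<lambda>c. c div m) f"
    by (rule poly_mapping_eqI) (use a in \<open>auto simp: dvdc_def lookup_ofint_mult lookup_map_eq\<close>)
  then show "\<exists>h. f = of_int m * h" by blast
next
  assume "\<exists>h. f = of_int m * h"
  then show "dvdc m f" by (auto simp: dvdc_def lookup_ofint_mult)
qed

lemma red_eq_iff: "red m a = red m b \<longleftrightarrow> dvdc m (a - b)"
proof -
  have "red m a = red m b \<longleftrightarrow> (\<forall>d. Poly_Mapping.lookup a d mod m = Poly_Mapping.lookup b d mod m)"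
    by (auto simp: poly_mapping_eq_iff lookup_red fun_eq_iff)
  also have "\<dots> \<longleftrightarrow> dvdc m (a - b)"
    by (simp add: dvdc_def lookup_minus mod_eq_dvd_iff)
  finally show ?thesis .
qed

lemma red_eq_iff2: "red m a = red m b \<longleftrightarrow> (\<exists>h. a = b + of_int m * h)"
  unfolding red_eq_iff dvdc_iff by (metis add_diff_cancel_left' diff_add_cancel)

lemma red_red: "red m (red m a) = red m a"
  by (rule poly_mapping_eqI) (simp add: lookup_red)

lemma red_add: "red m (a + b) = red m (red m a + red m b)"
  by (rule poly_mapping_eqI) (simp add: lookup_red lookup_add mod_add_eq)

lemma red_mult_left: "red m (red m a * b) = red m (a * b)"
proof -
  have "red m (red m a) = red m a" by (rule red_red)
  then obtain h where h: "red m a = a + of_int m * h" using red_eq_iff2 by blast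
  show ?thesis unfolding red_eq_iff2 h by (rule exI[of _ "h*b"]) (simp add: algebra_simps)
qed

lemma red_mult_right: "red m (a * red m b) = red m (a * b)"
  using red_mult_left[of m b a] by (simp add: mult.commute)

lemma red_ofint_mult: "red m (of_int m * a) = 0"
  by (rule poly_mapping_eqI) (simp add: lookup_red lookup_ofint_mult)

lemma red_zero [simp]: "red m 0 = 0"
  by (rule poly_mapping_eqI) (simp add: lookup_red)

lemma poly_expand: "f = (\<Sum>k\<in>Poly_Mapping.keys f. Poly_Mapping.single k (Poly_Mapping.lookup f k))"
  by (rule poly_mapping_eqI) (auto simp: lookup_sum lookup_single when_def in_keys_iff)

lemma Zz_iff: "f \<in> Zz n \<longleftrightarrow> (\<forall>d. Poly_Mapping.lookup f d \<noteq> 0 \<longrightarrow> Poly_Mapping.keys d \<subseteq> {..<n})"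
  by (auto simp: Zz_def in_keys_iff)

lemma Zz_0 [simp]: "0 \<in> Zz n" by (simp add: Zz_iff)
lemma Zz_1 [simp]: "1 \<in> Zz n" by (simp add: Zz_iff lookup_one when_def)
lemma Zz_add: "f \<in> Zz n \<Longrightarrow> g \<in> Zz n \<Longrightarrow> f + g \<in> Zz n"
  unfolding Zz_iff lookup_add by (metis add.left_neutral add.right_neutral)
lemma Zz_uminus: "f \<in> Zz n \<Longrightarrow> - f \<in> Zz n"
  by (auto simp: Zz_iff)
lemma Zz_diff: "f \<in> Zz n \<Longrightarrow> g \<in> Zz n \<Longrightarrow> f - g \<in> Zz n"
  unfolding Zz_iff lookup_minus by (metis diff_zero diff_self)
lemma Zz_single: "Poly_Mapping.keys d \<subseteq> {..<n} \<Longrightarrow> Poly_Mapping.single d c \<in> Zz n"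
  by (auto simp: Zz_iff lookup_single when_def)
lemma Zz_ofint: "of_int c \<in> Zz n"
  by (auto simp: Zz_iff lookup_of_int when_def)
lemma Zz_mult: assumes "f \<in> Zz n" "g \<in> Zz n" shows "f * g \<in> Zz n"
proof -
  have "Poly_Mapping.keys (f * g) \<subseteq> {a + b | a b. a \<in> Poly_Mapping.keys f \<and> b \<in> Poly_Mapping.keys g}"
    by (rule keys_mult)
  moreover have "Poly_Mapping.keys (a + b) \<subseteq> {..<n}" if "a \<in> Poly_Mapping.keys f" "b \<in> Poly_Mapping.keys g" for a b
    using keys_add[of a b] assms that unfolding Zz_def by blast
  ultimately show ?thesis unfolding Zz_def by blast
qed
lemma Zz_sum: "(\<And>a. a \<in> A \<Longrightarrow> F a \<in> Zz n) \<Longrightarrow> sum F A \<in> Zz n"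
  by (induction A rule: infinite_finite_induct) (auto intro: Zz_add)
lemma Zz_power: "f \<in> Zz n \<Longrightarrow> f ^ k \<in> Zz n"
  by (induction k) (auto intro: Zz_mult)
lemma Zz_map: "f \<in> Zz n \<Longrightarrow> Poly_Mapping.map h f \<in> Zz n"
  by (auto simp: Zz_iff lookup_map_eq split: if_splits)
lemma Zz_red: "f \<in> Zz n \<Longrightarrow> red m f \<in> Zz n"
  unfolding red_def by (rule Zz_map)
lemma Zz_zvar: "i < n \<Longrightarrow> zvar i \<in> Zz n"
  unfolding zvar_def by (rule Zz_single) auto

section \<open>Euler operator and QC\<close>

definition EE :: "nat \<Rightarrow> mpoly \<Rightarrow> mpoly" where
  "EE i f = Poly_Mapping.mapp (\<lambda>d c. int (Poly_Mapping.lookup d i) * c) f"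

lemma lookup_EE: "Poly_Mapping.lookup (EE i f) d = int (Poly_Mapping.lookup d i) * Poly_Mapping.lookup f d"
  by (auto simp: EE_def lookup_mapp when_def in_keys_iff)

lemma EE_add: "EE i (f + g) = EE i f + EE i g"
  by (rule poly_mapping_eqI) (simp add: lookup_EE lookup_add algebra_simps)
lemma EE_diff: "EE i (f - g) = EE i f - EE i g"
  by (rule poly_mapping_eqI) (simp add: lookup_EE lookup_minus algebra_simps)
lemma EE_0 [simp]: "EE i 0 = 0"
  by (rule poly_mapping_eqI) (simp add: lookup_EE)
lemma EE_1 [simp]: "EE i 1 = 0"
  by (rule poly_mapping_eqI) (simp add: lookup_EE lookup_one when_def)
lemma EE_sum: "EE i (sum F A) = (\<Sum>a\<in>A. EE i (F a))"
  by (induction A rule: infinite_finite_induct) (auto simp: EE_add)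
lemma EE_single: "EE i (Poly_Mapping.single d c) = Poly_Mapping.single d (int (Poly_Mapping.lookup d i) * c)"
  by (rule poly_mapping_eqI) (simp add: lookup_EE lookup_single when_def)
lemma EE_ofint_mult: "EE i (of_int c * f) = of_int c * EE i f"
  by (rule poly_mapping_eqI) (simp only: lookup_EE lookup_ofint_mult mult.left_commute)

lemma EE_single_mult: "EE i (Poly_Mapping.single a x * Poly_Mapping.single b y)
   = EE i (Poly_Mapping.single a x) * Poly_Mapping.single b y + Poly_Mapping.single a x * EE i (Poly_Mapping.single b y)"
  by (simp add: mult_single EE_single lookup_add algebra_simps flip: single_add)

lemma EE_mult: "EE i (f * g) = EE i f * g + f * EE i g"
proof -
  let ?S = "\<lambda>h k. Poly_Mapping.single k (Poly_Mapping.lookup h k)"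
  have "EE i (f * g) = EE i ((\<Sum>a\<in>Poly_Mapping.keys f. ?S f a) * (\<Sum>b\<in>Poly_Mapping.keys g. ?S g b))"
    by (simp flip: poly_expand)
  also have "\<dots> = (\<Sum>a\<in>Poly_Mapping.keys f. \<Sum>b\<in>Poly_Mapping.keys g. EE i (?S f a * ?S g b))"
    by (simp add: sum_product EE_sum)
  also have "\<dots> = (\<Sum>a\<in>Poly_Mapping.keys f. \<Sum>b\<in>Poly_Mapping.keys g. EE i (?S f a) * ?S g b + ?S f a * EE i (?S g b))"
    by (simp add: EE_single_mult)
  also have "\<dots> = EE i (\<Sum>a\<in>Poly_Mapping.keys f. ?S f a) * (\<Sum>b\<in>Poly_Mapping.keys g. ?S g b)
      + (\<Sum>a\<in>Poly_Mapping.keys f. ?S f a) * EE i (\<Sum>b\<in>Poly_Mapping.keys g. ?S g b)"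
    by (simp add: sum_product EE_sum sum.distrib)
  finally show ?thesis by (simp flip: poly_expand)
qed




lemma lookup_pdiff: "Poly_Mapping.lookup (pdiff i f) d' =
   int (Poly_Mapping.lookup (d' + Poly_Mapping.single i 1) i) * Poly_Mapping.lookup f (d' + Poly_Mapping.single i 1)"
proof -
  let ?e = "Poly_Mapping.single i (1::nat)"
  have eq: "((int (Poly_Mapping.lookup d i) * Poly_Mapping.lookup f d) when d - ?e = d') =
        (if d = d' + ?e then int (Poly_Mapping.lookup d i) * Poly_Mapping.lookup f d else 0)" for d
  proof (cases "Poly_Mapping.lookup d i = 0")
    case True
    have "d \<noteq> d' + ?e"
    proof
      assume "d = d' + ?e"
      then have "Poly_Mapping.lookup d i = Poly_Mapping.lookup d' i + 1" by (simp add: lookup_add)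
      with True show False by simp
    qed
    then show ?thesis using True by (simp add: when_def)
  next
    case False
    have "d - ?e = d' \<longleftrightarrow> d = d' + ?e"
    proof
      assume "d - ?e = d'"
      then have "\<And>x. Poly_Mapping.lookup (d - ?e) x = Poly_Mapping.lookup d' x" by simp
      note h = this
      have "Poly_Mapping.lookup d' x + Poly_Mapping.lookup ?e x = Poly_Mapping.lookup d x" for x
        using h[of x] False by (cases "x = i") (auto simp: lookup_minus lookup_single)
      then show "d = d' + ?e" by (auto simp: poly_mapping_eq_iff fun_eq_iff lookup_add)
    next
      assume "d = d' + ?e" then show "d - ?e = d'" by simp
    qed
    then show ?thesis by (simp add: when_def)
  qed
  have "Poly_Mapping.lookup (pdiff i f) d' = (\<Sum>d\<in>Poly_Mapping.keys f.
      (int (Poly_Mapping.lookup d i) * Poly_Mapping.lookup f d) when d - ?e = d')"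
    by (simp add: pdiff_def lookup_sum lookup_single)
  also have "\<dots> = (\<Sum>d\<in>Poly_Mapping.keys f. if d = d' + ?e then int (Poly_Mapping.lookup d i) * Poly_Mapping.lookup f d else 0)"
    by (rule sum.cong[OF refl eq])
  also have "\<dots> = int (Poly_Mapping.lookup (d' + ?e) i) * Poly_Mapping.lookup f (d' + ?e)"
    by (simp add: sum.delta' in_keys_iff)
  finally show ?thesis .
qed

lemma QC_iff: "f \<in> QC n p r \<longleftrightarrow> f \<in> Zz n \<and> (\<forall>i<n. dvdc (int p ^ r) (EE i f))"
proof -
  have "(\<forall>d. (int p) ^ r dvd Poly_Mapping.lookup (pdiff i f) d) \<longleftrightarrow> dvdc (int p ^ r) (EE i f)" for i
  proof
    assume a: "\<forall>d. (int p) ^ r dvd Poly_Mapping.lookup (pdiff i f) d"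
    show "dvdc (int p ^ r) (EE i f)"
      unfolding dvdc_def lookup_EE
    proof
      fix d
      show "int p ^ r dvd int (Poly_Mapping.lookup d i) * Poly_Mapping.lookup f d"
      proof (cases "Poly_Mapping.lookup d i = 0")
        case False
        have "d - Poly_Mapping.single i 1 + Poly_Mapping.single i 1 = d"
          using False by (auto simp: poly_mapping_eq_iff fun_eq_iff lookup_add lookup_minus lookup_single when_def)
        then show ?thesis using a[rule_format, of "d - Poly_Mapping.single i 1"] by (simp add: lookup_pdiff)
      qed simp
    qed
  next
    assume "dvdc (int p ^ r) (EE i f)"
    then show "\<forall>d. (int p) ^ r dvd Poly_Mapping.lookup (pdiff i f) d"
      by (simp add: dvdc_def lookup_EE lookup_pdiff)
  qed
  then show ?thesis unfolding QC_def by auto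
qed

lemma dvdc_add: "dvdc m a \<Longrightarrow> dvdc m b \<Longrightarrow> dvdc m (a + b)"
  by (simp add: dvdc_def lookup_add)
lemma dvdc_diff: "dvdc m a \<Longrightarrow> dvdc m b \<Longrightarrow> dvdc m (a - b)"
  by (simp add: dvdc_def lookup_minus)
lemma dvdc_0 [simp]: "dvdc m 0" by (simp add: dvdc_def)
lemma dvdc_multL: "dvdc m a \<Longrightarrow> dvdc m (a * b)"
  by (auto simp: dvdc_iff mult.assoc)
lemma dvdc_multR: "dvdc m b \<Longrightarrow> dvdc m (a * b)"
  by (metis dvdc_multL mult.commute)
lemma dvdc_mono: "dvdc m a \<Longrightarrow> k dvd m \<Longrightarrow> dvdc k a"
  by (auto simp: dvdc_def intro: dvd_trans)
lemma dvdc_ofint: "dvdc m (of_int m * a)"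
  by (auto simp: dvdc_iff)

lemma QC_add: "f \<in> QC n p r \<Longrightarrow> g \<in> QC n p r \<Longrightarrow> f + g \<in> QC n p r"
  by (simp add: QC_iff Zz_add EE_add dvdc_add)
lemma QC_diff: "f \<in> QC n p r \<Longrightarrow> g \<in> QC n p r \<Longrightarrow> f - g \<in> QC n p r"
  by (simp add: QC_iff Zz_diff EE_diff dvdc_diff)
lemma QC_mult: "f \<in> QC n p r \<Longrightarrow> g \<in> QC n p r \<Longrightarrow> f * g \<in> QC n p r"
  by (simp add: QC_iff Zz_mult EE_mult dvdc_add dvdc_multL dvdc_multR)
lemma QC_0 [simp]: "0 \<in> QC n p r" by (simp add: QC_iff)
lemma QC_1 [simp]: "1 \<in> QC n p r" by (simp add: QC_iff)
lemma QC_ofint_mult: "f \<in> QC n p r \<Longrightarrow> of_int c * f \<in> QC n p r"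
  by (simp add: QC_iff Zz_mult Zz_ofint EE_ofint_mult dvdc_multR)
lemma QC_mono: "f \<in> QC n p r \<Longrightarrow> r' \<le> r \<Longrightarrow> f \<in> QC n p r'"
  by (auto simp: QC_iff intro: dvdc_mono le_imp_power_dvd)
lemma QC_0_iff: "f \<in> QC n p 0 \<longleftrightarrow> f \<in> Zz n"
  by (simp add: QC_iff dvdc_def)
lemma QC_sum: "(\<And>a. a \<in> A \<Longrightarrow> F a \<in> QC n p r) \<Longrightarrow> sum F A \<in> QC n p r"
  by (induction A rule: infinite_finite_induct) (auto intro: QC_add)




lemma pdecomp: fixes p k :: nat assumes "prime p" "k > 0"
  shows "\<exists>u k'. k = p ^ u * k' \<and> \<not> p dvd k'"
  using assms(2)
proof (induction k rule: less_induct)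
  case (less k)
  show ?case
  proof (cases "p dvd k")
    case True
    then obtain k1 where k1: "k = p * k1" by blast
    have p1: "p > 1" using assms(1) prime_gt_1_nat by blast
    have "k1 < k" "k1 > 0" using k1 less.prems p1 by auto
    with less.IH obtain u k' where "k1 = p ^ u * k'" "\<not> p dvd k'" by blast
    then show ?thesis using k1 by (intro exI[of _ "Suc u"] exI[of _ k']) auto
  next
    case False
    then show ?thesis by (intro exI[of _ 0] exI[of _ k]) auto
  qed
qed

lemma int_cancel_lemma:
  fixes p u v k' :: nat and a :: int
  assumes "prime p" "u \<le> v" "\<not> p dvd k'" "int p ^ v dvd int (p ^ u * k') * a"
  shows "int p ^ (v - u) dvd a"
proof -
  have pv: "int p ^ v = int p ^ u * int p ^ (v - u)"
    using assms(2) by (simp flip: power_add)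
  have "int p ^ u * int p ^ (v - u) dvd int p ^ u * (int k' * a)"
    using assms(4) pv by (simp add: mult.assoc)
  then have "int p ^ (v - u) dvd int k' * a"
    using assms(1) by (subst (asm) dvd_mult_cancel_left) (auto simp: prime_gt_0_nat)
  moreover have "coprime (int p ^ (v - u)) (int k')"
    using assms(1,3) by (simp add: prime_imp_coprime coprime_power_left_iff)
  ultimately show ?thesis using coprime_dvd_mult_right_iff by blast
qed




definition zp :: "nat \<Rightarrow> mpoly poly \<Rightarrow> bool" where
  "zp n G \<longleftrightarrow> (\<forall>k. coeff G k \<in> Zz n)"

lemma zp_mult: "zp n G \<Longrightarrow> zp n H \<Longrightarrow> zp n (G * H)"
  by (auto simp: zp_def coeff_mult intro!: Zz_sum Zz_mult)
lemma zp_1: "zp n 1"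
  by (auto simp: zp_def coeff_1)
lemma zp_power: "zp n G \<Longrightarrow> zp n (G ^ k)"
  by (induction k) (auto intro: zp_mult zp_1)
lemma zp_prod: "(\<And>a. a \<in> A \<Longrightarrow> zp n (F a)) \<Longrightarrow> zp n (prod F A)"
  by (induction A rule: infinite_finite_induct) (auto intro: zp_mult zp_1)
lemma zp_lin: "a \<in> Zz n \<Longrightarrow> b \<in> Zz n \<Longrightarrow> zp n [:a, b:]"
  by (auto simp: zp_def coeff_pCons split: nat.split)

definition EP :: "nat \<Rightarrow> mpoly poly \<Rightarrow> mpoly poly" where
  "EP i G = map_poly (EE i) G"

lemma coeff_EP: "coeff (EP i G) k = EE i (coeff G k)"
  by (simp add: EP_def coeff_map_poly)

lemma EP_mult: "EP i (G * H) = EP i G * H + G * EP i H"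
  by (rule poly_eqI) (simp add: coeff_EP coeff_mult EE_sum EE_mult sum.distrib)

lemma EP_power_Suc: "EP i (G ^ Suc m) = smult (of_nat (Suc m)) (G ^ m * EP i G)"
proof (induction m)
  case 0
  then show ?case by simp
next
  case (Suc m)
  have "EP i (G ^ Suc (Suc m)) = EP i (G * G ^ Suc m)" by simp
  also have "\<dots> = EP i G * G ^ Suc m + G * smult (of_nat (Suc m)) (G ^ m * EP i G)"
    by (simp only: EP_mult Suc)
  also have "\<dots> = smult 1 (G ^ Suc m * EP i G) + smult (of_nat (Suc m)) (G ^ Suc m * EP i G)"
    by (simp only: smult_one mult_smult_right) (simp add: ac_simps)
  also have "\<dots> = smult (of_nat (Suc (Suc m))) (G ^ Suc m * EP i G)"
    by (simp only: smult_add_left[symmetric]) simp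
  finally show ?case .
qed

lemma pow_cancel: fixes p u v :: nat and x :: int
  assumes "u \<le> v" "p > 0" "int p ^ v dvd int p ^ (v - u) * x" shows "int p ^ u dvd x"
proof -
  have "int p ^ v = int p ^ (v - u) * int p ^ u" using assms(1) by (simp flip: power_add)
  then show ?thesis using assms(2,3) by (simp add: dvd_mult_cancel_left)
qed

lemma coeff_smult_ofnat: "coeff (smult (of_nat N) X) k = of_int (int N) * (coeff X k :: mpoly)"
  by simp

lemma coeff_power_decomp:
  fixes B :: "mpoly poly"
  assumes zB: "zp n B" and p: "prime p"
  shows "coeff (B ^ (p ^ v)) k \<in> QC n p v"
    and "\<exists>u\<le>v. p ^ u dvd k \<and> (\<exists>e'. coeff (B ^ (p ^ v)) k = of_int (int p ^ (v - u)) * e' \<and> e' \<in> QC n p u)"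
proof -
  have p0: "p > 0" using p prime_gt_0_nat by blast
  obtain m where m: "p ^ v = Suc m" using p0 by (metis gr0_implies_Suc zero_less_power)
  let ?e = "coeff (B ^ (p ^ v)) k"
  have ez: "?e \<in> Zz n" using zp_power[OF zB] by (simp add: zp_def)
  have EEd: "dvdc (int p ^ v) (EE i ?e)" for i
  proof -
    have "EE i ?e = coeff (EP i (B ^ Suc m)) k" by (simp add: coeff_EP m)
    also have "\<dots> = of_int (int (p ^ v)) * coeff (B ^ m * EP i B) k"
      by (simp only: EP_power_Suc coeff_smult_ofnat) (simp add: m)
    finally show ?thesis by (metis dvdc_ofint of_nat_power)
  qed
  then show qc: "?e \<in> QC n p v" by (simp add: QC_iff ez)
  show "\<exists>u\<le>v. p ^ u dvd k \<and> (\<exists>e'. ?e = of_int (int p ^ (v - u)) * e' \<and> e' \<in> QC n p u)"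
  proof (cases "k = 0")
    case True
    then show ?thesis using qc by (intro exI[of _ v]) auto
  next
    case False
    then obtain j where j: "k = Suc j" by (metis not0_implies_Suc)
    have kd: "dvdc (int p ^ v) (of_int (int k) * ?e)"
    proof -
      have "of_int (int k) * ?e = coeff (pderiv (B ^ Suc m)) j"
        by (simp add: coeff_pderiv j m)
      also have "\<dots> = of_int (int (p ^ v)) * coeff (B ^ m * pderiv B) j"
        by (simp only: pderiv_power_Suc mult_smult_left coeff_smult_ofnat) (simp add: m)
      finally show ?thesis by (metis dvdc_ofint of_nat_power)
    qed
    obtain u0 k' where uk: "k = p ^ u0 * k'" "\<not> p dvd k'" using pdecomp[OF p] False by blast
    show ?thesis
    proof (cases "v \<le> u0")
      case True
      have "p ^ v dvd k" using uk True by (simp add: le_imp_power_dvd dvd_mult2)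
      then show ?thesis using qc by (intro exI[of _ v]) auto
    next
      case False
      then have u0v: "u0 \<le> v" by simp
      have dv: "int p ^ (v - u0) dvd Poly_Mapping.lookup ?e d" for d
      proof -
        have "int p ^ v dvd int k * Poly_Mapping.lookup ?e d"
          using kd unfolding dvdc_def lookup_ofint_mult by blast
        then show ?thesis using int_cancel_lemma[OF p u0v uk(2)] uk(1) by blast
      qed
      then have "dvdc (int p ^ (v - u0)) ?e" by (simp add: dvdc_def)
      then obtain e' where e': "?e = of_int (int p ^ (v - u0)) * e'" 
        unfolding dvdc_iff by blast
      have e'z: "e' = Poly_Mapping.map (\<lambda>c. c div (int p ^ (v - u0))) ?e"
      proof (rule poly_mapping_eqI)
        fix d
        have "Poly_Mapping.lookup ?e d = int p ^ (v - u0) * Poly_Mapping.lookup e' d"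
          by (subst e') (simp only: lookup_ofint_mult)
        then show "Poly_Mapping.lookup e' d = Poly_Mapping.lookup (Poly_Mapping.map (\<lambda>c. c div int p ^ (v - u0)) ?e) d"
          using p0 by (auto simp: lookup_map_eq)
      qed
      have e'Z: "e' \<in> Zz n" using e'z ez Zz_map by simp
      have "dvdc (int p ^ u0) (EE i e')" for i
      proof -
        have "dvdc (int p ^ v) (of_int (int p ^ (v - u0)) * EE i e')"
          using EEd[of i] by (subst (asm) e') (simp only: EE_ofint_mult)
        then show ?thesis unfolding dvdc_def lookup_ofint_mult
          using u0v p0 pow_cancel by blast
      qed
      then have "e' \<in> QC n p u0" by (simp add: QC_iff e'Z)
      then show ?thesis using e' uk u0v by (intro exI[of _ u0]) auto
    qed
  qed
qed




abbreviation LL :: "nat \<Rightarrow> mpoly poly" where "LL j \<equiv> [:- zvar j, 1:]"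

lemma Mr_twice: assumes "odd p" shows "2 * Mr p a = p ^ a - 1"
proof -
  have "odd (p ^ a)" using assms by simp
  then have "even (p ^ a - 1)" by simp
  then show ?thesis unfolding Mr_def by simp
qed

lemma Mr_split: assumes "odd p" "v \<le> r" shows "Mr p r = p ^ v * Mr p (r - v) + Mr p v"
proof -
  have p0: "p > 0" using assms(1) by (cases p) auto
  obtain P' where P: "p ^ v = Suc P'" using p0 by (metis gr0_implies_Suc zero_less_power)
  obtain Q' where Q: "p ^ (r - v) = Suc Q'" using p0 by (metis gr0_implies_Suc zero_less_power)
  have pr: "p ^ r = p ^ v * p ^ (r - v)" using assms(2) by (simp flip: power_add)
  have a: "2 * Mr p r = Suc P' * Suc Q' - 1" using Mr_twice[OF assms(1), of r] pr P Q by simp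
  have b: "2 * Mr p (r - v) = Q'" using Mr_twice[OF assms(1), of "r - v"] Q by simp
  have c: "2 * Mr p v = P'" using Mr_twice[OF assms(1), of v] P by simp
  have "2 * Mr p r = 2 * (p ^ v * Mr p (r - v) + Mr p v)"
    unfolding a P distrib_left mult.left_commute[of 2] b c by simp
  then show ?thesis by simp
qed

lemma Mr_pos: assumes "odd p" "p > 1" "v \<ge> 1" shows "Mr p v \<ge> 1"
proof -
  have "p ^ v \<ge> p" using assms by (simp add: self_le_power)
  moreover have "p \<ge> 3" using assms by presburger
  ultimately have "2 * Mr p v \<ge> 2" using Mr_twice[OF assms(1), of v] by simp
  then show ?thesis by simp
qed

lemma PhiQuot_factor:
  assumes "odd p" "p > 1" "1 \<le> v" "v \<le> r" "i < n"
  shows "PhiQuot n p r i = (\<Prod>j\<in>{..<n}. LL j ^ Mr p (r - v)) ^ (p ^ v) * PhiQuot n p v i"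
proof -
  let ?a = "Mr p (r - v) * p ^ v"
  have M: "Mr p r = ?a + Mr p v" using Mr_split[OF assms(1,4)] by simp
  have mv: "Mr p v \<ge> 1" using Mr_pos assms by blast
  have "(\<Prod>j\<in>{..<n}. LL j ^ Mr p (r - v)) ^ (p ^ v) = (\<Prod>j\<in>{..<n}. LL j ^ ?a)"
    by (simp add: prod_power_distrib power_mult)
  also have "\<dots> = LL i ^ ?a * (\<Prod>j\<in>{..<n} - {i}. LL j ^ ?a)"
    using assms(5) by (subst prod.remove[of _ i]) auto
  finally have eq: "(\<Prod>j\<in>{..<n}. LL j ^ Mr p (r - v)) ^ (p ^ v) = LL i ^ ?a * (\<Prod>j\<in>{..<n} - {i}. LL j ^ ?a)" .
  have e1: "?a + (Mr p v - 1) = Mr p r - 1" using M mv by simp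
  have e2: "?a + Mr p v = Mr p r" using M by simp
  have "(\<Prod>j\<in>{..<n}. LL j ^ Mr p (r - v)) ^ (p ^ v) * PhiQuot n p v i
      = (LL i ^ ?a * LL i ^ (Mr p v - 1)) * ((\<Prod>j\<in>{..<n} - {i}. LL j ^ ?a) * (\<Prod>j\<in>{..<n} - {i}. LL j ^ Mr p v))"
    unfolding eq PhiQuot_def by (simp only: ac_simps)
  also have "\<dots> = LL i ^ (Mr p r - 1) * (\<Prod>j\<in>{..<n} - {i}. LL j ^ Mr p r)"
    by (simp only: power_add[symmetric] prod.distrib[symmetric] e1 e2)
  finally show ?thesis unfolding PhiQuot_def by simp
qed

lemma degree_LL_pow: "degree (LL j ^ k) \<le> k"
  using degree_power_le[of "LL j" k] by simp

lemma degree_PhiQuot: assumes "i < n" shows "degree (PhiQuot n p r i) \<le> (Mr p r - 1) + (n - 1) * Mr p r"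
proof -
  have "degree (\<Prod>j\<in>{..<n} - {i}. LL j ^ Mr p r) \<le> (\<Sum>j\<in>{..<n} - {i}. degree (LL j ^ Mr p r))"
    using degree_prod_sum_le[of "{..<n} - {i}" "\<lambda>j. LL j ^ Mr p r"] by (simp add: o_def)
  also have "\<dots> \<le> (\<Sum>j\<in>{..<n} - {i}. Mr p r)" by (intro sum_mono degree_LL_pow)
  also have "\<dots> = (n - 1) * Mr p r" using assms by simp
  finally have "degree (\<Prod>j\<in>{..<n} - {i}. LL j ^ Mr p r) \<le> (n - 1) * Mr p r" .
  then show ?thesis unfolding PhiQuot_def
    using degree_mult_le[of "LL i ^ (Mr p r - 1)" "\<Prod>j\<in>{..<n} - {i}. LL j ^ Mr p r"] degree_LL_pow[of i "Mr p r - 1"]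
    by linarith
qed

lemma PhiQuot_coeff_zero:
  assumes "odd p" "p > 1" "n = 2 * g + 1" "i < n" "l > g" "r \<ge> 1"
  shows "coeff (PhiQuot n p r i) (l * p ^ r - 1) = 0"
proof -
  have mv: "Mr p r \<ge> 1" using Mr_pos assms by blast
  have tw: "2 * Mr p r = p ^ r - 1" using Mr_twice[OF assms(1)] .
  have pr: "p ^ r \<ge> 1" using assms(2) by simp
  have "2 * (n * Mr p r) < 2 * (l * p ^ r)"
  proof -
    have "2 * (n * Mr p r) = n * (p ^ r - 1)" using tw by simp
    also have "\<dots> < n * p ^ r" using assms(3) pr by (intro mult_strict_left_mono) auto
    also have "\<dots> \<le> (2 * l) * p ^ r" using assms(3,5) by (intro mult_right_mono) auto
    finally show ?thesis by simp
  qed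
  then have lt: "n * Mr p r < l * p ^ r" by simp
  have "(Mr p r - 1) + (n - 1) * Mr p r = n * Mr p r - 1"
    using mv assms(4) by (cases n) (auto simp: algebra_simps)
  moreover have "1 \<le> n * Mr p r" using mv assms(4) by (cases n) auto
  ultimately have "(Mr p r - 1) + (n - 1) * Mr p r < l * p ^ r - 1"
    using lt diff_less_mono by metis
  then show ?thesis using degree_PhiQuot[OF assms(4), of p r] by (intro coeff_eq_0) linarith
qed

lemma zp_PhiQuot: "i < n \<Longrightarrow> zp n (PhiQuot n p r i)"
  unfolding PhiQuot_def
  by (intro zp_mult zp_power zp_prod zp_lin Zz_uminus Zz_zvar Zz_1) auto




definition PV :: "nat \<Rightarrow> nat \<Rightarrow> nat \<Rightarrow> nat \<Rightarrow> mvec" where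
  "PV n p r j = (\<lambda>i. if i < n then coeff (PhiQuot n p r i) j else 0)"

lemma Ivec_PV: "Ivec n p r l = PV n p r (l * p ^ r - 1)"
  unfolding Ivec_def PV_def by (rule refl)

definition gen :: "nat \<Rightarrow> nat \<Rightarrow> nat \<Rightarrow> nat \<Rightarrow> nat \<Rightarrow> (nat \<Rightarrow> nat \<Rightarrow> mpoly) \<Rightarrow> mvec" where
  "gen n g p s t c = (\<lambda>i. \<Sum>r\<in>{1..t}. \<Sum>l\<in>{1..g}.
        c r l * of_int ((int p) ^ (s - r)) * Ivec n p r l i)"

definition okc :: "nat \<Rightarrow> nat \<Rightarrow> nat \<Rightarrow> nat \<Rightarrow> (nat \<Rightarrow> nat \<Rightarrow> mpoly) \<Rightarrow> bool" where
  "okc n g p t c \<longleftrightarrow> (\<forall>r\<in>{1..t}. \<forall>l\<in>{1..g}. c r l \<in> QC n p r)"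

definition Span :: "nat \<Rightarrow> nat \<Rightarrow> nat \<Rightarrow> nat \<Rightarrow> nat \<Rightarrow> mvec set" where
  "Span n g p s t = {y. \<exists>c. okc n g p t c \<and> pis p s y = pis p s (gen n g p s t c)}"

lemma Mset_eq: "Mset n g p s t = pis p s ` Span n g p s t"
proof
  show "Mset n g p s t \<subseteq> pis p s ` Span n g p s t"
    unfolding Mset_def Span_def okc_def gen_def by blast
  show "pis p s ` Span n g p s t \<subseteq> Mset n g p s t"
    unfolding Mset_def Span_def okc_def gen_def by auto
qed

lemma pis_eq_iff: "pis p s y = pis p s y' \<longleftrightarrow> (\<forall>i. red (int p ^ s) (y i) = red (int p ^ s) (y' i))"
  by (simp add: pis_def fun_eq_iff)

lemma pis_pis: "pis p s (pis p s y) = pis p s y"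
  by (simp add: pis_def red_red)

lemma Span_cong: "y \<in> Span n g p s t \<Longrightarrow> pis p s y' = pis p s y \<Longrightarrow> y' \<in> Span n g p s t"
  unfolding Span_def by auto

lemma Span_0: "(\<lambda>i. 0) \<in> Span n g p s t"
  unfolding Span_def okc_def
  by (rule CollectI, rule exI[of _ "\<lambda>r l. 0"]) (simp add: gen_def)

lemma Span_add:
  assumes "y1 \<in> Span n g p s t" "y2 \<in> Span n g p s t"
  shows "(\<lambda>i. y1 i + y2 i) \<in> Span n g p s t"
proof -
  obtain c1 where c1: "okc n g p t c1" "pis p s y1 = pis p s (gen n g p s t c1)" using assms(1) unfolding Span_def by blast
  obtain c2 where c2: "okc n g p t c2" "pis p s y2 = pis p s (gen n g p s t c2)" using assms(2) unfolding Span_def by blast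
  have ok: "okc n g p t (\<lambda>r l. c1 r l + c2 r l)" using c1(1) c2(1) by (simp add: okc_def QC_add)
  have gen: "gen n g p s t (\<lambda>r l. c1 r l + c2 r l) i = gen n g p s t c1 i + gen n g p s t c2 i" for i
    by (simp add: gen_def sum.distrib distrib_right)
  have "red (int p ^ s) (y1 i + y2 i) = red (int p ^ s) (gen n g p s t (\<lambda>r l. c1 r l + c2 r l) i)" for i
  proof -
    have a: "red (int p ^ s) (y1 i) = red (int p ^ s) (gen n g p s t c1 i)" using c1(2) by (simp add: pis_eq_iff)
    have b: "red (int p ^ s) (y2 i) = red (int p ^ s) (gen n g p s t c2 i)" using c2(2) by (simp add: pis_eq_iff)
    show ?thesis by (subst red_add, subst gen, subst (2) red_add) (simp only: a b)
  qed
  then show ?thesis using ok unfolding Span_def pis_eq_iff by blast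
qed

lemma Span_sum:
  assumes "finite A" "\<And>a. a \<in> A \<Longrightarrow> (\<lambda>i. G a i) \<in> Span n g p s t"
  shows "(\<lambda>i. \<Sum>a\<in>A. G a i) \<in> Span n g p s t"
  using assms
proof (induction A rule: finite_induct)
  case empty
  then show ?case using Span_0 by simp
next
  case (insert x F)
  then show ?case using Span_add[of "\<lambda>i. G x i" n g p s t "\<lambda>i. \<Sum>a\<in>F. G a i"]
    by (simp add: sum.insert)
qed

lemma Span_mult:
  assumes "f \<in> QC n p t" "y \<in> Span n g p s t"
  shows "(\<lambda>i. f * y i) \<in> Span n g p s t"
proof -
  obtain c where c: "okc n g p t c" "pis p s y = pis p s (gen n g p s t c)" using assms(2) unfolding Span_def by blast
  have ok: "okc n g p t (\<lambda>r l. f * c r l)" unfolding okc_def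
  proof (intro ballI)
    fix r l assume "r \<in> {1..t}" "l \<in> {1..g}"
    then show "f * c r l \<in> QC n p r" using c(1) unfolding okc_def by (intro QC_mult QC_mono[OF assms(1)]) auto
  qed
  have gen: "gen n g p s t (\<lambda>r l. f * c r l) i = f * gen n g p s t c i" for i
    by (simp add: gen_def sum_distrib_left mult.assoc)
  have "red (int p ^ s) (f * y i) = red (int p ^ s) (gen n g p s t (\<lambda>r l. f * c r l) i)" for i
  proof -
    have a: "red (int p ^ s) (y i) = red (int p ^ s) (gen n g p s t c i)" using c(2) by (simp add: pis_eq_iff)
    show ?thesis unfolding gen by (metis a red_mult_right)
  qed
  then show ?thesis using ok unfolding Span_def pis_eq_iff by blast
qed

lemma Span_mono:
  assumes "t' \<le> t" "y \<in> Span n g p s t'"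
  shows "y \<in> Span n g p s t"
proof -
  obtain c where c: "okc n g p t' c" "pis p s y = pis p s (gen n g p s t' c)" using assms(2) unfolding Span_def by blast
  let ?c = "\<lambda>r l. if r \<le> t' then c r l else 0"
  have ok: "okc n g p t ?c" using c(1) by (auto simp: okc_def)
  have geq: "gen n g p s t ?c i = gen n g p s t' c i" for i
  proof -
    have "gen n g p s t ?c i = (\<Sum>r\<in>{1..t}. if r \<le> t' then (\<Sum>l\<in>{1..g}. c r l * of_int ((int p) ^ (s - r)) * Ivec n p r l i) else 0)"
      unfolding gen_def by (intro sum.cong) auto
    also have "\<dots> = (\<Sum>r\<in>{r\<in>{1..t}. r \<le> t'}. \<Sum>l\<in>{1..g}. c r l * of_int ((int p) ^ (s - r)) * Ivec n p r l i)"
      by (subst sum.inter_filter) auto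
    also have "{r\<in>{1..t}. r \<le> t'} = {1..t'}" using assms(1) by auto
    finally show ?thesis unfolding gen_def by simp
  qed
  have "gen n g p s t ?c = gen n g p s t' c" by (rule ext) (rule geq)
  then show ?thesis using ok c(2) unfolding Span_def by (intro CollectI exI[of _ ?c]) simp
qed

lemma Span_zero:
  "(\<lambda>i. of_int (int p ^ s) * y i) \<in> Span n g p s t"
proof -
  have "pis p s (\<lambda>i. of_int (int p ^ s) * y i) = pis p s (\<lambda>i. 0)"
    by (simp only: pis_eq_iff red_ofint_mult red_zero) simp
  then show ?thesis using Span_cong[OF Span_0] by blast
qed

lemma Span_gen:
  assumes "1 \<le> r" "r \<le> t" "1 \<le> l" "l \<le> g" "c \<in> QC n p r"
  shows "(\<lambda>i. c * of_int ((int p) ^ (s - r)) * Ivec n p r l i) \<in> Span n g p s t"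
proof -
  let ?c = "\<lambda>r' l'. if r' = r \<and> l' = l then c else 0"
  have ok: "okc n g p t ?c" using assms(5) by (auto simp: okc_def)
  have geq: "gen n g p s t ?c i = c * of_int ((int p) ^ (s - r)) * Ivec n p r l i" for i
  proof -
    let ?Y = "\<lambda>r l. of_int ((int p) ^ (s - r)) * Ivec n p r l i"
    have inner: "(\<Sum>l'\<in>{1..g}. ?c r' l' * ?Y r' l') = (if r' = r then c * ?Y r l else 0)" for r'
    proof (cases "r' = r")
      case True
      then have "(\<Sum>l'\<in>{1..g}. ?c r' l' * ?Y r' l') = (\<Sum>l'\<in>{1..g}. if l' = l then c * ?Y r l else 0)"
        by (intro sum.cong) auto
      also have "\<dots> = c * ?Y r l" using assms(3,4) by simp
      finally show ?thesis using True by simp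
    qed simp
    have "gen n g p s t ?c i = (\<Sum>r'\<in>{1..t}. \<Sum>l'\<in>{1..g}. ?c r' l' * ?Y r' l')"
      unfolding gen_def by (simp add: mult.assoc)
    also have "\<dots> = (\<Sum>r'\<in>{1..t}. if r' = r then c * ?Y r l else 0)" by (simp only: inner)
    also have "\<dots> = c * ?Y r l" using assms(1,2) by simp
    finally show ?thesis by (simp add: mult.assoc)
  qed
  have "gen n g p s t ?c = (\<lambda>i. c * of_int ((int p) ^ (s - r)) * Ivec n p r l i)" by (rule ext) (rule geq)
  then show ?thesis using ok unfolding Span_def by (intro CollectI exI[of _ ?c]) simp
qed




lemma PV_factor:
  assumes "odd p" "p > 1" "1 \<le> v" "v \<le> r"
  shows "PV n p r j i = (\<Sum>k\<le>j. coeff ((\<Prod>j\<in>{..<n}. LL j ^ Mr p (r - v)) ^ (p ^ v)) k * PV n p v (j - k) i)"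
proof (cases "i < n")
  case True
  then show ?thesis unfolding PV_def using PhiQuot_factor[OF assms True] by (simp add: coeff_mult)
qed (simp add: PV_def)

lemma PV_zero:
  assumes "odd p" "p > 1" "n = 2 * g + 1" "l > g" "r \<ge> 1"
  shows "PV n p r (l * p ^ r - 1) i = 0"
  unfolding PV_def using PhiQuot_coeff_zero[OF assms(1,2,3) _ assms(4,5)] by simp

lemma zp_B: "zp n (\<Prod>j\<in>{..<n}. LL j ^ a)"
  by (intro zp_prod zp_power zp_lin Zz_uminus Zz_zvar Zz_1) auto

lemma D_lemma:
  assumes p: "prime p" "odd p" and n: "n = 2 * g + 1"
  shows "r \<le> s \<Longrightarrow> 1 \<le> v \<Longrightarrow> v \<le> r \<Longrightarrow> c \<in> QC n p v \<Longrightarrow> p ^ v dvd (j + 1) \<Longrightarrow>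
    (\<lambda>i. c * of_int (int p ^ (s - v)) * PV n p r j i) \<in> Span n g p s v"
proof (induction r arbitrary: v j c rule: less_induct)
  case (less r)
  have p1: "p > 1" using p prime_gt_1_nat by blast
  show ?case
  proof (cases "v = r")
    case True
    obtain l where l: "j + 1 = p ^ r * l" using less.prems(5) True by blast
    have l1: "l \<ge> 1" using l by (cases l) auto
    have jl: "j = l * p ^ r - 1" using l by (simp add: mult.commute)
    show ?thesis
    proof (cases "l \<le> g")
      case True
      have "(\<lambda>i. c * of_int (int p ^ (s - r)) * Ivec n p r l i) \<in> Span n g p s r"
        using less.prems True l1 \<open>v = r\<close> by (intro Span_gen) auto
      then show ?thesis using \<open>v = r\<close> by (simp add: jl Ivec_PV)
    next
      case False
      have "PV n p r j i = 0" for i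
        unfolding jl using PV_zero[OF p(2) p1 n, of l r i] False less.prems \<open>v = r\<close> by simp
      then show ?thesis using Span_0 by simp
    qed
  next
    case False
    then have vr: "v < r" using less.prems by simp
    let ?C = "(\<Prod>j\<in>{..<n}. LL j ^ Mr p (r - v)) ^ (p ^ v)"
    have eq: "c * of_int (int p ^ (s - v)) * PV n p r j i =
      (\<Sum>k\<le>j. c * of_int (int p ^ (s - v)) * coeff ?C k * PV n p v (j - k) i)" for i
      using PV_factor[OF p(2) p1 less.prems(2) less.prems(3), of n j i]
      by (simp add: sum_distrib_left mult.assoc)
    have "(\<lambda>i. c * of_int (int p ^ (s - v)) * coeff ?C k * PV n p v (j - k) i) \<in> Span n g p s v"
      if k: "k \<in> {..j}" for k
    proof -
      obtain u e' where u: "u \<le> v" "p ^ u dvd k" "coeff ?C k = of_int (int p ^ (v - u)) * e'" "e' \<in> QC n p u"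
        using coeff_power_decomp(2)[OF zp_B p(1), of v k "Mr p (r - v)" n] by blast
      have pw: "(of_int (int p ^ (s - v)) :: mpoly) * of_int (int p ^ (v - u)) = of_int (int p ^ (s - u))"
        using u(1) vr less.prems(1) by (simp flip: power_add)
      have teq: "c * of_int (int p ^ (s - v)) * coeff ?C k * PV n p v (j - k) i
           = (c * e') * of_int (int p ^ (s - u)) * PV n p v (j - k) i" for i
        unfolding u(3) pw[symmetric] by (simp only: ac_simps)
      show ?thesis
      proof (cases "u = 0")
        case True
        have "(\<lambda>i. of_int (int p ^ s) * ((c * e') * PV n p v (j - k) i)) \<in> Span n g p s v"
          by (rule Span_zero)
        moreover have "(\<lambda>i. of_int (int p ^ s) * ((c * e') * PV n p v (j - k) i)) = (\<lambda>i. (c * e') * of_int (int p ^ (s - u)) * PV n p v (j - k) i)"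
          by (rule ext) (simp only: True diff_zero ac_simps)
        ultimately show ?thesis unfolding teq by simp
      next
        case False
        have ce: "c * e' \<in> QC n p u" using QC_mult[OF QC_mono[OF less.prems(4) u(1)] u(4)] .
        have dv: "p ^ u dvd (j - k + 1)"
        proof -
          have "p ^ u dvd j + 1" using less.prems(5) u(1) by (meson dvd_trans le_imp_power_dvd)
          moreover have "j - k + 1 = (j + 1) - k" using k by auto
          ultimately show ?thesis using u(2) by (simp add: dvd_diff_nat)
        qed
        have "(\<lambda>i. (c * e') * of_int (int p ^ (s - u)) * PV n p v (j - k) i) \<in> Span n g p s u"
          using less.IH[OF vr _ _ u(1) ce dv] vr less.prems(1) False by simp
        then have "(\<lambda>i. (c * e') * of_int (int p ^ (s - u)) * PV n p v (j - k) i) \<in> Span n g p s v"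
          using Span_mono u(1) by blast
        then show ?thesis unfolding teq .
      qed
    qed
    then have "(\<lambda>i. \<Sum>k\<le>j. c * of_int (int p ^ (s - v)) * coeff ?C k * PV n p v (j - k) i) \<in> Span n g p s v"
      by (intro Span_sum) auto
    then show ?thesis unfolding eq .
  qed
qed

lemma K_lemma:
  assumes p: "prime p" "odd p" and n: "n = 2 * g + 1"
    and r: "2 \<le> r" "r \<le> s" and q: "q \<in> QC n p (r - 1)" and l: "1 \<le> l"
  shows "(\<lambda>i. q * of_int (int p ^ (s - (r - 1))) * Ivec n p r l i) \<in> Span n g p s (r - 1)"
proof -
  have "p ^ (r - 1) dvd (l * p ^ r - 1 + 1)"
  proof -
    have "p ^ r \<ge> 1" using p(1) prime_gt_0_nat by (simp add: Suc_leI)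
    then have "l * p ^ r \<ge> 1 * 1" using l by (intro mult_le_mono)
    then have "l * p ^ r \<ge> 1" by simp
    then have "l * p ^ r - 1 + 1 = l * p ^ r" by (rule le_add_diff_inverse2)
    moreover have "p ^ (r - 1) dvd p ^ r" by (simp add: le_imp_power_dvd)
    ultimately show ?thesis by simp
  qed
  then show ?thesis using D_lemma[OF p n r(2), of "r - 1" q "l * p ^ r - 1"] r q
    by (simp add: Ivec_PV)
qed




lemma red_cong_mult: assumes "red m a = red m a'" "red m b = red m b'" shows "red m (a * b) = red m (a' * b')"
proof -
  have "red m (a * b) = red m (red m a * red m b)" by (simp only: red_mult_left red_mult_right)
  also have "\<dots> = red m (red m a' * red m b')" by (simp only: assms)
  also have "\<dots> = red m (a' * b')" by (simp only: red_mult_left red_mult_right)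
  finally show ?thesis .
qed

lemma red_cong_diff: assumes "red m a = red m a'" "red m b = red m b'" shows "red m (a - b) = red m (a' - b')"
proof -
  obtain h1 where h1: "a = a' + of_int m * h1" using assms(1) red_eq_iff2 by blast
  obtain h2 where h2: "b = b' + of_int m * h2" using assms(2) red_eq_iff2 by blast
  show ?thesis unfolding red_eq_iff2 h1 h2 by (rule exI[of _ "h1 - h2"]) (simp add: algebra_simps)
qed

lemma pis_red_apply: "pis p s y i = red (int p ^ s) (y i)"
  by (simp add: pis_def)

lemma L2:
  assumes p: "prime p" "odd p" and n: "n = 2 * g + 1" and ts: "t \<le> s"
    and q: "\<forall>r\<in>{1..t}. \<forall>l\<in>{1..g}. q r l \<in> QC n p (r - 1)"
  shows "(\<lambda>i. of_nat p * (\<Sum>r\<in>{1..t}. \<Sum>l\<in>{1..g}. q r l * of_int (int p ^ (s - r)) * Ivec n p r l i))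
     \<in> Span n g p s (t - 1)"
proof -
  have "(\<lambda>i. of_nat p * (q r l * of_int (int p ^ (s - r)) * Ivec n p r l i)) \<in> Span n g p s (t - 1)"
    if rl: "r \<in> {1..t}" "l \<in> {1..g}" for r l
  proof -
    have pw: "(of_nat p :: mpoly) * of_int (int p ^ (s - r)) = of_int (int p ^ (s - (r - 1)))"
    proof -
      have "s - (r - 1) = Suc (s - r)" using rl ts by auto
      then show ?thesis by simp
    qed
    have teq: "of_nat p * (q r l * of_int (int p ^ (s - r)) * Ivec n p r l i)
        = q r l * of_int (int p ^ (s - (r - 1))) * Ivec n p r l i" for i
      unfolding pw[symmetric] by (simp only: ac_simps)
    show ?thesis
    proof (cases "r = 1")
      case True
      have "(\<lambda>i. of_int (int p ^ s) * (q r l * Ivec n p r l i)) \<in> Span n g p s (t - 1)"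
        by (rule Span_zero)
      moreover have "(\<lambda>i. of_int (int p ^ s) * (q r l * Ivec n p r l i)) = (\<lambda>i. q r l * of_int (int p ^ (s - (r - 1))) * Ivec n p r l i)"
        by (rule ext) (simp only: True diff_self_eq_0 diff_zero ac_simps)
      ultimately show ?thesis unfolding teq by simp
    next
      case False
      then have r2: "2 \<le> r" using rl by auto
      have "(\<lambda>i. q r l * of_int (int p ^ (s - (r - 1))) * Ivec n p r l i) \<in> Span n g p s (r - 1)"
        using K_lemma[OF p n r2 _ _ ] rl ts q by auto
      then show ?thesis unfolding teq using Span_mono[of "r - 1" "t - 1"] rl by auto
    qed
  qed
  then have "(\<lambda>i. \<Sum>r\<in>{1..t}. \<Sum>l\<in>{1..g}. of_nat p * (q r l * of_int (int p ^ (s - r)) * Ivec n p r l i)) \<in> Span n g p s (t - 1)"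
    by (intro Span_sum) auto
  then show ?thesis by (simp only: sum_distrib_left)
qed

lemma Mset_memE:
  assumes "x \<in> Mset n g p s t"
  obtains c where "okc n g p t c" "x = pis p s (gen n g p s t c)"
  using assms unfolding Mset_def okc_def gen_def by blast

lemma pM_general:
  assumes p: "prime p" "odd p" and n: "n = 2 * g + 1" and ts: "t \<le> s"
    and x: "x \<in> Mset n g p s t"
  shows "pis p s (\<lambda>i. of_nat p * x i) \<in> Mset n g p s (t - 1)"
proof -
  obtain c where c: "okc n g p t c" "x = pis p s (gen n g p s t c)" using x by (rule Mset_memE)
  have sp: "(\<lambda>i. of_nat p * gen n g p s t c i) \<in> Span n g p s (t - 1)"
    unfolding gen_def
  proof (intro L2[OF p n ts] ballI)
    fix r l assume "r \<in> {1..t}" "l \<in> {1..g}"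
    then have "c r l \<in> QC n p r" using c(1) unfolding okc_def by blast
    then show "c r l \<in> QC n p (r - 1)" using QC_mono by (metis diff_le_self)
  qed
  have "pis p s (\<lambda>i. of_nat p * x i) = pis p s (\<lambda>i. of_nat p * gen n g p s t c i)"
    unfolding c(2) pis_def by (rule ext) (rule red_mult_right)
  then show ?thesis unfolding Mset_eq by (rule image_eqI[OF _ sp])
qed




definition Pd :: "nat \<Rightarrow> nat \<Rightarrow> (nat \<Rightarrow>\<^sub>0 nat) \<Rightarrow> bool" where
  "Pd p t d \<longleftrightarrow> (\<forall>i. p ^ t dvd Poly_Mapping.lookup d i)"

lemma lookup_rho: "Poly_Mapping.lookup (rho p t f) d = (if Pd p t d then Poly_Mapping.lookup f d mod int p else 0)"
proof -
  have "Poly_Mapping.lookup (rho p t f) d = (\<Sum>d'\<in>{d \<in> Poly_Mapping.keys f. Pd p t d}. if d' = d then Poly_Mapping.lookup f d' mod int p else 0)"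
    unfolding rho_def Pd_def lookup_sum lookup_single by (intro sum.cong) (auto simp: when_def)
  also have "\<dots> = (if d \<in> {d \<in> Poly_Mapping.keys f. Pd p t d} then Poly_Mapping.lookup f d mod int p else 0)"
    by (simp add: sum.delta')
  also have "\<dots> = (if Pd p t d then Poly_Mapping.lookup f d mod int p else 0)"
    by (auto simp: in_keys_iff)
  finally show ?thesis .
qed

lemma qc_coeff:
  assumes f: "f \<in> QC n p t" and p: "prime p" and nP: "\<not> Pd p t d"
  shows "int p dvd Poly_Mapping.lookup f d"
proof (rule ccontr)
  assume nd: "\<not> int p dvd Poly_Mapping.lookup f d"
  then have nz: "Poly_Mapping.lookup f d \<noteq> 0" by auto
  obtain i where i: "\<not> p ^ t dvd Poly_Mapping.lookup d i" using nP unfolding Pd_def by blast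
  then have "Poly_Mapping.lookup d i \<noteq> 0" by (metis dvd_0_right)
  then have "i \<in> Poly_Mapping.keys d" by (simp add: in_keys_iff)
  moreover have "Poly_Mapping.keys d \<subseteq> {..<n}" using f nz unfolding QC_def Zz_def by (auto simp: in_keys_iff)
  ultimately have "i < n" by auto
  then have "dvdc (int p ^ t) (EE i f)" using f by (simp add: QC_iff)
  then have "int p ^ t dvd int (Poly_Mapping.lookup d i) * Poly_Mapping.lookup f d"
    by (simp add: dvdc_def lookup_EE)
  moreover have "coprime (int p ^ t) (Poly_Mapping.lookup f d)"
    using nd p by (simp add: prime_imp_coprime_int coprime_power_left_iff prime_nat_iff_prime)
  ultimately have "int p ^ t dvd int (Poly_Mapping.lookup d i)"
    using coprime_dvd_mult_left_iff by blast
  then have "p ^ t dvd Poly_Mapping.lookup d i" by (metis of_nat_dvd_iff of_nat_power)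
  with i show False by blast
qed

definition Fl :: "nat \<Rightarrow> nat \<Rightarrow> mpoly \<Rightarrow> mpoly" where
  "Fl p t f = (\<Sum>d\<in>{d \<in> Poly_Mapping.keys f. Pd p t d}. Poly_Mapping.single d (Poly_Mapping.lookup f d))"

lemma lookup_Fl: "Poly_Mapping.lookup (Fl p t f) d = (if Pd p t d then Poly_Mapping.lookup f d else 0)"
proof -
  have "Poly_Mapping.lookup (Fl p t f) d = (\<Sum>d'\<in>{d \<in> Poly_Mapping.keys f. Pd p t d}. if d' = d then Poly_Mapping.lookup f d' else 0)"
    unfolding Fl_def lookup_sum lookup_single by (intro sum.cong) (auto simp: when_def)
  also have "\<dots> = (if Pd p t d then Poly_Mapping.lookup f d else 0)"
    by (auto simp: sum.delta' in_keys_iff)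
  finally show ?thesis .
qed

lemma rho_Fl: "rho p t f = red (int p) (Fl p t f)"
  by (rule poly_mapping_eqI) (simp add: lookup_rho lookup_red lookup_Fl)

lemma Fl_add: "Fl p t (a + b) = Fl p t a + Fl p t b"
  by (rule poly_mapping_eqI) (simp add: lookup_Fl lookup_add)

lemma Fl_ofint: "Fl p t (of_int m * a) = of_int m * Fl p t a"
  by (rule poly_mapping_eqI) (simp only: lookup_Fl lookup_ofint_mult, simp)

lemma Fl_red: "red m a = red m b \<Longrightarrow> red m (Fl p t a) = red m (Fl p t b)"
  unfolding red_eq_iff2 by (auto simp: Fl_add Fl_ofint)

lemma Pd_add: "Pd p t a \<Longrightarrow> Pd p t b \<Longrightarrow> Pd p t (a + b)"
  by (simp add: Pd_def lookup_add)

lemma Fl_prod: "Fl p t (Fl p t a * Fl p t b) = Fl p t a * Fl p t b"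
proof (rule poly_mapping_eqI)
  fix d
  show "Poly_Mapping.lookup (Fl p t (Fl p t a * Fl p t b)) d = Poly_Mapping.lookup (Fl p t a * Fl p t b) d"
  proof (cases "Pd p t d")
    case False
    have "d \<notin> Poly_Mapping.keys (Fl p t a * Fl p t b)"
    proof
      assume "d \<in> Poly_Mapping.keys (Fl p t a * Fl p t b)"
      then obtain x y where "d = x + y" "x \<in> Poly_Mapping.keys (Fl p t a)" "y \<in> Poly_Mapping.keys (Fl p t b)"
        using keys_mult by blast
      moreover have "Pd p t x" "Pd p t y" using calculation
        by (auto simp: in_keys_iff lookup_Fl split: if_splits)
      ultimately show False using False Pd_add by blast
    qed
    then show ?thesis using False by (simp add: lookup_Fl in_keys_iff)
  qed (simp add: lookup_Fl)
qed

lemma red_Fl_QC: assumes "f \<in> QC n p t" "prime p" shows "red (int p) f = red (int p) (Fl p t f)"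
  unfolding red_eq_iff dvdc_def lookup_minus lookup_Fl
  using qc_coeff[OF assms] by auto

lemma rho_mult:
  assumes "f \<in> QC n p t" "h \<in> QC n p t" "prime p"
  shows "rho p t (f * h) = red (int p) (rho p t f * rho p t h)"
proof -
  have "red (int p) (f * h) = red (int p) (Fl p t f * Fl p t h)"
    using red_Fl_QC[OF assms(1,3)] red_Fl_QC[OF assms(2,3)] by (rule red_cong_mult)
  then have "red (int p) (Fl p t (f * h)) = red (int p) (Fl p t (Fl p t f * Fl p t h))"
    by (rule Fl_red)
  also have "\<dots> = red (int p) (Fl p t f * Fl p t h)" by (simp only: Fl_prod)
  also have "\<dots> = red (int p) (rho p t f * rho p t h)"
    unfolding rho_Fl by (simp only: red_mult_left red_mult_right)
  finally show ?thesis unfolding rho_Fl .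
qed

lemma rho_add: "rho p t (f + h) = red (int p) (rho p t f + rho p t h)"
  by (rule poly_mapping_eqI) (simp add: lookup_rho lookup_red lookup_add mod_add_eq)

lemma rho_one: "p > 1 \<Longrightarrow> rho p t 1 = 1"
  by (rule poly_mapping_eqI) (auto simp: lookup_rho lookup_one when_def Pd_def)

lemma rho_FpZ: assumes "f \<in> QC n p t" "p > 0" shows "rho p t f \<in> FpZ n p t"
  unfolding FpZ_def
proof (intro CollectI conjI allI ballI)
  have fz: "f \<in> Zz n" using assms(1) by (simp add: QC_def)
  show "rho p t f \<in> Zz n" using fz unfolding Zz_iff lookup_rho by (metis mod_0)
  fix d
  show "0 \<le> Poly_Mapping.lookup (rho p t f) d" "Poly_Mapping.lookup (rho p t f) d < int p"
    using assms(2) by (auto simp: lookup_rho)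
next
  fix d i assume "d \<in> Poly_Mapping.keys (rho p t f)"
  then show "p ^ t dvd Poly_Mapping.lookup d i"
    by (auto simp: in_keys_iff lookup_rho Pd_def split: if_splits)
qed

lemma FpZ_surj: assumes "a \<in> FpZ n p t" shows "a \<in> QC n p t" "rho p t a = a"
proof -
  have az: "a \<in> Zz n" and kd: "\<And>d i. Poly_Mapping.lookup a d \<noteq> 0 \<Longrightarrow> p ^ t dvd Poly_Mapping.lookup d i"
    and rg: "\<And>d. 0 \<le> Poly_Mapping.lookup a d \<and> Poly_Mapping.lookup a d < int p"
    using assms unfolding FpZ_def by (auto simp: in_keys_iff)
  have "dvdc (int p ^ t) (EE i a)" for i
    unfolding dvdc_def lookup_EE
  proof
    fix d
    show "int p ^ t dvd int (Poly_Mapping.lookup d i) * Poly_Mapping.lookup a d"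
    proof (cases "Poly_Mapping.lookup a d = 0")
      case False
      then have "int p ^ t dvd int (Poly_Mapping.lookup d i)" using kd by (metis of_nat_dvd_iff of_nat_power)
      then show ?thesis by simp
    qed simp
  qed
  then show "a \<in> QC n p t" by (simp add: QC_iff az)
  show "rho p t a = a"
  proof (rule poly_mapping_eqI)
    fix d
    show "Poly_Mapping.lookup (rho p t a) d = Poly_Mapping.lookup a d"
    proof (cases "Poly_Mapping.lookup a d = 0")
      case False
      then have "Pd p t d" using kd by (simp add: Pd_def)
      then show ?thesis using rg[of d] by (simp add: lookup_rho)
    qed (simp add: lookup_rho)
  qed
qed

lemma rho_mono: assumes "f \<in> QC n p t" "prime p" "t \<ge> 1" shows "rho p (t - 1) f = rho p t f"
proof (rule poly_mapping_eqI)
  fix d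
  have pt: "p ^ (t - 1) dvd p ^ t" by (simp add: le_imp_power_dvd)
  show "Poly_Mapping.lookup (rho p (t - 1) f) d = Poly_Mapping.lookup (rho p t f) d"
  proof (cases "Pd p t d")
    case True
    then have "Pd p (t - 1) d" using pt unfolding Pd_def by (meson dvd_trans)
    then show ?thesis using True by (simp add: lookup_rho)
  next
    case False
    then have "int p dvd Poly_Mapping.lookup f d" using qc_coeff[OF assms(1,2)] by blast
    then show ?thesis using False by (simp add: lookup_rho)
  qed
qed

lemma rho_eq_diff:
  assumes f: "f \<in> QC n p t" and h: "h \<in> QC n p t" and p: "prime p" and t: "t \<ge> 1"
    and eq: "rho p t f = rho p t h"
  shows "\<exists>u\<in>QC n p (t - 1). f - h = of_nat p * u"
proof -
  let ?D = "f - h"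
  have D: "?D \<in> QC n p t" using f h by (rule QC_diff)
  have p0: "p > 0" using p prime_gt_0_nat by blast
  have "dvdc (int p) ?D" unfolding dvdc_def
  proof
    fix d
    show "int p dvd Poly_Mapping.lookup ?D d"
    proof (cases "Pd p t d")
      case True
      have "Poly_Mapping.lookup (rho p t f) d = Poly_Mapping.lookup (rho p t h) d" using eq by simp
      then have "Poly_Mapping.lookup f d mod int p = Poly_Mapping.lookup h d mod int p"
        using True by (simp add: lookup_rho)
      then show ?thesis by (simp add: lookup_minus mod_eq_dvd_iff)
    next
      case False
      then show ?thesis using qc_coeff[OF D p] by blast
    qed
  qed
  then obtain u where u: "?D = of_int (int p) * u" unfolding dvdc_iff by blast
  have uz: "u = Poly_Mapping.map (\<lambda>c. c div int p) ?D"
  proof (rule poly_mapping_eqI)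
    fix d
    have "Poly_Mapping.lookup ?D d = int p * Poly_Mapping.lookup u d"
      by (subst u) (simp only: lookup_ofint_mult)
    then show "Poly_Mapping.lookup u d = Poly_Mapping.lookup (Poly_Mapping.map (\<lambda>c. c div int p) ?D) d"
      using p0 by (auto simp: lookup_map_eq)
  qed
  have uZ: "u \<in> Zz n" using uz D Zz_map by (simp add: QC_def)
  have "dvdc (int p ^ (t - 1)) (EE i u)" if i: "i < n" for i
  proof -
    have "dvdc (int p ^ t) (of_int (int p) * EE i u)"
      using D i unfolding QC_iff by (subst (asm) u) (simp only: EE_ofint_mult)
    then show ?thesis unfolding dvdc_def lookup_ofint_mult
      using pow_cancel[of "t - 1" t p] t p0 by auto
  qed
  then have "u \<in> QC n p (t - 1)" by (simp add: QC_iff uZ)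
  then show ?thesis using u by auto
qed




lemma mult_Mset:
  assumes f: "f \<in> QC n p t" and x: "x \<in> Mset n g p s t"
  shows "pis p s (\<lambda>i. red (int p ^ s) f * x i) \<in> Mset n g p s t"
proof -
  obtain y where y: "y \<in> Span n g p s t" "x = pis p s y" using x unfolding Mset_eq by blast
  have "pis p s (\<lambda>i. red (int p ^ s) f * x i) = pis p s (\<lambda>i. f * y i)"
    unfolding y(2) pis_def by (rule ext) (simp only: red_mult_left red_mult_right)
  moreover have "(\<lambda>i. f * y i) \<in> Span n g p s t" using f y(1) by (rule Span_mult)
  ultimately show ?thesis unfolding Mset_eq by (intro image_eqI)
qed

lemma fact_Mset:
  assumes p: "prime p" "odd p" and n: "n = 2 * g + 1" and ts: "t \<le> s" and t: "1 \<le> t"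
    and f: "f \<in> QC n p t" and h: "h \<in> QC n p t" and eq: "rho p t f = rho p t h"
    and x: "x \<in> Mset n g p s t"
  shows "pis p s (\<lambda>i. red (int p ^ s) f * x i - red (int p ^ s) h * x i) \<in> Mset n g p s (t - 1)"
proof -
  obtain u where u: "u \<in> QC n p (t - 1)" "f - h = of_nat p * u"
    using rho_eq_diff[OF f h p(1) t eq] by blast
  obtain c where c: "okc n g p t c" "x = pis p s (gen n g p s t c)" using x by (rule Mset_memE)
  have "pis p s (\<lambda>i. red (int p ^ s) f * x i - red (int p ^ s) h * x i)
     = pis p s (\<lambda>i. f * gen n g p s t c i - h * gen n g p s t c i)"
    unfolding c(2) pis_def
    by (rule ext) (intro red_cong_diff red_cong_mult; simp only: red_red)
  also have "\<dots> = pis p s (\<lambda>i. of_nat p * (\<Sum>r\<in>{1..t}. \<Sum>l\<in>{1..g}.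
      (u * c r l) * of_int (int p ^ (s - r)) * Ivec n p r l i))"
  proof -
    have "f * G - h * G = of_nat p * (u * G)" for G :: mpoly
    proof -
      have "f * G - h * G = (f - h) * G" by (rule left_diff_distrib[symmetric])
      then show ?thesis by (simp only: u(2) mult.assoc)
    qed
    moreover have "u * gen n g p s t c i = (\<Sum>r\<in>{1..t}. \<Sum>l\<in>{1..g}.
      (u * c r l) * of_int (int p ^ (s - r)) * Ivec n p r l i)" for i
      unfolding gen_def by (simp add: sum_distrib_left mult.assoc)
    ultimately show ?thesis by simp
  qed
  finally have e: "pis p s (\<lambda>i. red (int p ^ s) f * x i - red (int p ^ s) h * x i) = \<dots>" .
  have "(\<lambda>i. of_nat p * (\<Sum>r\<in>{1..t}. \<Sum>l\<in>{1..g}.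
      (u * c r l) * of_int (int p ^ (s - r)) * Ivec n p r l i)) \<in> Span n g p s (t - 1)"
  proof (intro L2[OF p n ts] ballI)
    fix r l assume rl: "r \<in> {1..t}" "l \<in> {1..g}"
    then have "c r l \<in> QC n p r" using c(1) unfolding okc_def by blast
    then have a: "c r l \<in> QC n p (r - 1)" using QC_mono by (metis diff_le_self)
    have "r - 1 \<le> t - 1" using rl by auto
    then have b: "u \<in> QC n p (r - 1)" by (rule QC_mono[OF u(1)])
    show "u * c r l \<in> QC n p (r - 1)" using QC_mult[OF b a] .
  qed
  then show ?thesis unfolding e Mset_eq by (intro imageI)
qed

theorem lemma6p1:
  fixes p g n s t :: nat
  assumes "prime p" and "odd p" and "g \<ge> 1" and "n = 2 * g + 1" and "p > n"
    and "1 \<le> t" and "t \<le> s"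
  shows
    \<comment> \<open>M^{t-1} is contained in M^t, so gr M^t is defined\<close>
    "Mset n g p s (t - 1) \<subseteq> Mset n g p s t
     \<comment> \<open>p M^t \<subseteq> M^{t-1}\<close>
   \<and> (\<forall>x\<in>Mset n g p s t. pis p s (\<lambda>i. of_nat p * x i) \<in> Mset n g p s (t - 1))
     \<comment> \<open>multiplication by pi_s(f), f quasi-constant mod p^t, preserves M^t and M^{t-1}\<close>
   \<and> (\<forall>f\<in>QC n p t.
        (\<forall>x\<in>Mset n g p s t. pis p s (\<lambda>i. red ((int p) ^ s) f * x i) \<in> Mset n g p s t)
      \<and> (\<forall>x\<in>Mset n g p s (t - 1).
           pis p s (\<lambda>i. red ((int p) ^ s) f * x i) \<in> Mset n g p s (t - 1)))
     \<comment> \<open>rho_t is a surjective ring homomorphism Z[z]_{p^t} \<rightarrow> F_p[z^{p^t}]\<close>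
   \<and> (\<forall>f\<in>QC n p t. rho p t f \<in> FpZ n p t)
   \<and> (\<forall>a\<in>FpZ n p t. \<exists>f\<in>QC n p t. rho p t f = a)
   \<and> rho p t 1 = 1
   \<and> (\<forall>f\<in>QC n p t. \<forall>h\<in>QC n p t.
        rho p t (f + h) = red (int p) (rho p t f + rho p t h)
      \<and> rho p t (f * h) = red (int p) (rho p t f * rho p t h))
     \<comment> \<open>the action on gr M^t = M^t / M^{t-1} factors through rho_t\<close>
   \<and> (\<forall>f\<in>QC n p t. \<forall>h\<in>QC n p t. rho p t f = rho p t h \<longrightarrow>
        (\<forall>x\<in>Mset n g p s t.
           pis p s (\<lambda>i. red ((int p) ^ s) f * x i - red ((int p) ^ s) h * x i)
             \<in> Mset n g p s (t - 1)))
     \<comment> \<open>multiplication by p induces a map gr M^t \<rightarrow> gr M^{t-1} (well defined: p M^{t-1} \<subseteq> M^{t-2},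
         where for t = 1 we have M^{t-2} = M^0 = 0, i.e. gr M^0 = 0)\<close>
   \<and> (\<forall>x\<in>Mset n g p s (t - 1). pis p s (\<lambda>i. of_nat p * x i) \<in> Mset n g p s (t - 2))
     \<comment> \<open>compatibility of the F_p[z^{p^t}]-structure on gr M^{t-1} (restricted from F_p[z^{p^{t-1}}])\<close>
   \<and> (t \<ge> 2 \<longrightarrow> (\<forall>f\<in>QC n p t. f \<in> QC n p (t - 1) \<and> rho p (t - 1) f = rho p t f))
     \<comment> \<open>the map induced by p is linear for the action\<close>
   \<and> (\<forall>f\<in>QC n p t. \<forall>x\<in>Mset n g p s t.
        pis p s (\<lambda>i. of_nat p * pis p s (\<lambda>j. red ((int p) ^ s) f * x j) i)
        = pis p s (\<lambda>i. red ((int p) ^ s) f * pis p s (\<lambda>j. of_nat p * x j) i))"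
proof -
  note p = assms(1,2) and n = assms(4) and t = assms(6) and ts = assms(7)
  have p1: "p > 1" by (rule prime_gt_1_nat[OF p(1)])
  then have p0: "p > 0" "p > 1" by simp_all
  have c1: "Mset n g p s (t - 1) \<subseteq> Mset n g p s t"
  proof (unfold Mset_eq, rule image_mono, rule subsetI)
    fix y assume "y \<in> Span n g p s (t - 1)"
    then show "y \<in> Span n g p s t" by (rule Span_mono[rotated]) simp
  qed
  have c2: "\<forall>x\<in>Mset n g p s t. pis p s (\<lambda>i. of_nat p * x i) \<in> Mset n g p s (t - 1)"
    using pM_general[OF p n ts] by blast
  have c3: "\<forall>f\<in>QC n p t.
        (\<forall>x\<in>Mset n g p s t. pis p s (\<lambda>i. red ((int p) ^ s) f * x i) \<in> Mset n g p s t)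
      \<and> (\<forall>x\<in>Mset n g p s (t - 1).
           pis p s (\<lambda>i. red ((int p) ^ s) f * x i) \<in> Mset n g p s (t - 1))"
    using mult_Mset QC_mono by (metis diff_le_self)
  have c4: "\<forall>f\<in>QC n p t. rho p t f \<in> FpZ n p t" using rho_FpZ p0 by blast
  have c5: "\<forall>a\<in>FpZ n p t. \<exists>f\<in>QC n p t. rho p t f = a" using FpZ_surj by blast
  have c6: "rho p t 1 = 1" using rho_one p0 by blast
  have c7: "\<forall>f\<in>QC n p t. \<forall>h\<in>QC n p t.
        rho p t (f + h) = red (int p) (rho p t f + rho p t h)
      \<and> rho p t (f * h) = red (int p) (rho p t f * rho p t h)"
    using rho_add rho_mult p(1) by blast
  have c8: "\<forall>f\<in>QC n p t. \<forall>h\<in>QC n p t. rho p t f = rho p t h \<longrightarrow>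
        (\<forall>x\<in>Mset n g p s t.
           pis p s (\<lambda>i. red ((int p) ^ s) f * x i - red ((int p) ^ s) h * x i)
             \<in> Mset n g p s (t - 1))"
    using fact_Mset[OF p n ts t] by blast
  have c9: "\<forall>x\<in>Mset n g p s (t - 1). pis p s (\<lambda>i. of_nat p * x i) \<in> Mset n g p s (t - 2)"
  proof -
    have "t - 1 \<le> s" using ts by simp
    from pM_general[OF p n this] show ?thesis by (simp add: numeral_2_eq_2 diff_diff_left)
  qed
  have c10: "t \<ge> 2 \<longrightarrow> (\<forall>f\<in>QC n p t. f \<in> QC n p (t - 1) \<and> rho p (t - 1) f = rho p t f)"
    using QC_mono rho_mono p(1) t by (metis diff_le_self)
  have c11: "\<forall>f\<in>QC n p t. \<forall>x\<in>Mset n g p s t.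
        pis p s (\<lambda>i. of_nat p * pis p s (\<lambda>j. red ((int p) ^ s) f * x j) i)
        = pis p s (\<lambda>i. red ((int p) ^ s) f * pis p s (\<lambda>j. of_nat p * x j) i)"
    unfolding pis_def by (intro ballI ext) (simp only: red_mult_right, simp only: ac_simps)
  show ?thesis using c1 c2 c3 c4 c5 c6 c7 c8 c9 c10 c11 by blast
qed


end
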